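(* Consider binary operation $\wedge$ on $\{0,1\}$ defined by $1\wedge1=1\wedge0=0\wedge0=1$ and $0\wedge1=0$. For $n\ge0$, the number of walks $0=y_0,y_1,\dots,y_n=1$ with steps $y_i-y_{i-1}\in\{-2,-1,1,2\}$ and $y_i\ge0$ for all $i$ equals the number of complete bracketings (full binary parenthesizations) of the word $0\wedge0\wedge\cdots\wedge0$ with $n+2$ zeroes whose value is $0$. *)

theory Defs
  imports Main
begin

definition wedge :: "nat \<Rightarrow> nat \<Rightarrow> nat" where
  "wedge x y = (if x = 0 \<and> y = 1 then 0 else 1)"

text \<open>Complete bracketings of a word x^x^...^x are full binary trees;
  the leaves are the letters, read left to right.\<close>
datatype bracketing = Leaf | Node bracketing bracketing

fun leaves :: "bracketing \<Rightarrow> nat" where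
  "leaves Leaf = 1"
| "leaves (Node l r) = leaves l + leaves r"

fun eval_zeros :: "bracketing \<Rightarrow> nat" where
  "eval_zeros Leaf = 0"
| "eval_zeros (Node l r) = wedge (eval_zeros l) (eval_zeros r)"

definition walks :: "nat \<Rightarrow> int list set" where
  "walks n = {ys. length ys = n + 1 \<and> ys ! 0 = 0 \<and> ys ! n = 1 \<and>
      (\<forall>i\<in>{1..n}. ys ! i - ys ! (i - 1) \<in> {-2, -1, 1, 2}) \<and>
      (\<forall>i\<le>n. ys ! i \<ge> 0)}"

end

theory Submission imports Defs "HOL-Computational_Algebra.Formal_Power_Series" begin
unbundle fps_syntax

fun w :: "nat \<Rightarrow> int \<Rightarrow> int \<Rightarrow> nat" where
  "w 0 h j = (if h = j \<and> 0 \<le> h then 1 else 0)"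
| "w (Suc n) h j = (if h < 0 then 0 else w n (h-2) j + w n (h-1) j + w n (h+1) j + w n (h+2) j)"

lemma w_negh: "h < 0 \<Longrightarrow> w n h j = 0"
  by (cases n) auto

lemma w_negj: "j < 0 \<Longrightarrow> w n h j = 0"
  by (induction n arbitrary: h) auto

lemma w_last: "w (Suc n) h j = (if j < 0 then 0 else w n h (j-2) + w n h (j-1) + w n h (j+1) + w n h (j+2))"
proof (induction n arbitrary: h j)
  case 0
  then show ?case by auto
next
  case (Suc n)
  have "w (Suc (Suc n)) h j = (if h < 0 then 0 else w (Suc n) (h-2) j + w (Suc n) (h-1) j + w (Suc n) (h+1) j + w (Suc n) (h+2) j)"
    by (fact w.simps(2))
  also have "\<dots> = (if h < 0 then 0 else
     (if j < 0 then 0 else w n (h-2) (j-2) + w n (h-2) (j-1) + w n (h-2) (j+1) + w n (h-2) (j+2)) +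
     (if j < 0 then 0 else w n (h-1) (j-2) + w n (h-1) (j-1) + w n (h-1) (j+1) + w n (h-1) (j+2)) +
     (if j < 0 then 0 else w n (h+1) (j-2) + w n (h+1) (j-1) + w n (h+1) (j+1) + w n (h+1) (j+2)) +
     (if j < 0 then 0 else w n (h+2) (j-2) + w n (h+2) (j-1) + w n (h+2) (j+1) + w n (h+2) (j+2)))"
    by (simp only: Suc.IH)
  finally show ?case by simp
qed

lemma w_sym: "w n h j = w n j h"
proof (induction n arbitrary: h j)
  case 0
  then show ?case by auto
next
  case (Suc n)
  have "w (Suc n) j h = (if h < 0 then 0 else w n j (h-2) + w n j (h-1) + w n j (h+1) + w n j (h+2))"
    by (rule w_last)
  then show ?case by (simp add: Suc.IH)
qed


definition WS :: "nat \<Rightarrow> int \<Rightarrow> int \<Rightarrow> int list set" where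
  "WS n h j = {ys. length ys = n + 1 \<and> ys ! 0 = h \<and> ys ! n = j \<and>
      (\<forall>i\<in>{1..n}. ys ! i - ys ! (i - 1) \<in> {-2, -1, 1, 2}) \<and>
      (\<forall>i\<le>n. ys ! i \<ge> 0)}"

lemma walks_WS: "walks n = WS n 0 1"
  unfolding walks_def WS_def by simp

lemma WS_0: "WS 0 h j = (if h = j \<and> 0 \<le> h then {[h]} else {})"
proof -
  have "ys \<in> WS 0 h j \<longleftrightarrow> h = j \<and> 0 \<le> h \<and> ys = [h]" for ys
  proof
    assume "ys \<in> WS 0 h j"
    then have l: "length ys = 1" and "ys ! 0 = h" "ys ! 0 = j" "ys ! 0 \<ge> 0" by (auto simp: WS_def)
    moreover from l obtain a where "ys = [a]" by (cases ys) auto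
    ultimately show "h = j \<and> 0 \<le> h \<and> ys = [h]" by auto
  qed (auto simp: WS_def)
  then show ?thesis by auto
qed

lemma WS_Suc: "WS (Suc n) h j = (if h < 0 then {} else
   (Cons h) ` (WS n (h-2) j \<union> WS n (h-1) j \<union> WS n (h+1) j \<union> WS n (h+2) j))"
proof -
  have "ys \<in> WS (Suc n) h j \<longleftrightarrow> 0 \<le> h \<and> (\<exists>ys'. ys = h # ys' \<and> (\<exists>d\<in>{-2,-1,1,2::int}. ys' \<in> WS n (h+d) j))" for ys
  proof
    assume A: "ys \<in> WS (Suc n) h j"
    then have l: "length ys = Suc (Suc n)" by (simp add: WS_def)
    then obtain a ys' where ys: "ys = a # ys'" by (cases ys) auto
    from A have a: "a = h" by (simp add: WS_def ys)
    from A have h0: "0 \<le> h" using a ys unfolding WS_def by force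
    from A have st: "\<forall>i\<in>{1..Suc n}. ys ! i - ys ! (i - 1) \<in> {-2, -1, 1, 2}"
      and nn: "\<forall>i\<le>Suc n. ys ! i \<ge> 0" and e: "ys ! Suc n = j" by (auto simp: WS_def)
    have d: "ys' ! 0 - h \<in> {-2,-1,1,2}" using st[rule_format, of 1] ys a by simp
    have "ys' \<in> WS n (ys' ! 0) j"
      unfolding WS_def
    proof (intro CollectI conjI ballI allI impI)
      show "length ys' = n + 1" using l ys by simp
      show "ys' ! 0 = ys' ! 0" by simp
      show "ys' ! n = j" using e ys by simp
      fix i assume "i \<in> {1..n}"
      then have "Suc i \<in> {1..Suc n}" by simp
      from st[rule_format, OF this] show "ys' ! i - ys' ! (i - 1) \<in> {-2, -1, 1, 2}"
        using ys \<open>i \<in> {1..n}\<close> by (cases i) auto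
    next
      fix i assume "i \<le> n"
      then show "ys' ! i \<ge> 0" using nn[rule_format, of "Suc i"] ys by simp
    qed
    moreover have "ys' ! 0 = h + (ys' ! 0 - h)" by simp
    ultimately show "0 \<le> h \<and> (\<exists>ys'. ys = h # ys' \<and> (\<exists>d\<in>{-2,-1,1,2::int}. ys' \<in> WS n (h+d) j))"
      using h0 ys a d by (metis)
  next
    assume "0 \<le> h \<and> (\<exists>ys'. ys = h # ys' \<and> (\<exists>d\<in>{-2,-1,1,2::int}. ys' \<in> WS n (h+d) j))"
    then obtain ys' d where h0: "0 \<le> h" and ys: "ys = h # ys'" and d: "d \<in> {-2,-1,1,2::int}"
      and W: "ys' \<in> WS n (h+d) j" by blast
    from W have l: "length ys' = n + 1" and z: "ys' ! 0 = h + d" and e: "ys' ! n = j"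
      and st: "\<forall>i\<in>{1..n}. ys' ! i - ys' ! (i - 1) \<in> {-2, -1, 1, 2}"
      and nn: "\<forall>i\<le>n. ys' ! i \<ge> 0" by (auto simp: WS_def)
    show "ys \<in> WS (Suc n) h j"
      unfolding WS_def
    proof (intro CollectI conjI ballI allI impI)
      show "length ys = Suc n + 1" using l ys by simp
      show "ys ! 0 = h" using ys by simp
      show "ys ! Suc n = j" using ys e by simp
      fix i assume i: "i \<in> {1..Suc n}"
      show "ys ! i - ys ! (i - 1) \<in> {-2, -1, 1, 2}"
      proof (cases "i = 1")
        case True then show ?thesis using ys z d by auto
      next
        case False
        then obtain k where k: "i = Suc k" "k \<in> {1..n}" using i by (cases i) auto
        then show ?thesis using st[rule_format, OF k(2)] ys by (cases k) auto
      qed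
    next
      fix i assume i: "i \<le> Suc n"
      show "ys ! i \<ge> 0"
      proof (cases i)
        case 0 then show ?thesis using ys h0 by simp
      next
        case (Suc k) then show ?thesis using nn[rule_format, of k] ys i by simp
      qed
    qed
  qed
  then show ?thesis by auto
qed

lemma WS_disj: "a \<noteq> b \<Longrightarrow> WS n a j \<inter> WS n b j = {}"
  by (auto simp: WS_def)

lemma card_WS: "finite (WS n h j) \<and> card (WS n h j) = w n h j"
proof (induction n arbitrary: h)
  case 0
  then show ?case by (simp add: WS_0)
next
  case (Suc n)
  show ?case
  proof (cases "h < 0")
    case True then show ?thesis by (simp add: WS_Suc)
  next
    case False
    let ?U = "WS n (h-2) j \<union> WS n (h-1) j \<union> WS n (h+1) j \<union> WS n (h+2) j"
    have fin: "finite ?U" using Suc.IH by simp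
    have "card ?U = w n (h-2) j + w n (h-1) j + w n (h+1) j + w n (h+2) j"
      using Suc.IH
      by (simp add: card_Un_disjoint WS_disj Int_Un_distrib2 Int_Un_distrib)
    moreover have "card ((Cons h) ` ?U) = card ?U"
      by (rule card_image) (simp add: inj_on_def)
    ultimately show ?thesis using False fin by (simp add: WS_Suc)
  qed
qed

lemma card_walks: "card (walks n) = w n 0 1"
  using card_WS[of n 0 1] by (simp add: walks_WS)

lemma w_fp: "1 \<le> h \<Longrightarrow> w n h j = w n (h-1) (j-1) + (\<Sum>k<n. (w k (h-1) 0 + w k (h-1) 1) * w (n-1-k) 0 j)"
proof (induction n arbitrary: h)
  case 0
  then show ?case by simp
next
  case (Suc n)
  define Tk where "Tk x = (\<Sum>k<n. (w k x 0 + w k x 1) * w (n-1-k) 0 j)" for x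
  have IH: "1 \<le> x \<Longrightarrow> w n x j = w n (x-1) (j-1) + Tk (x-1)" for x
    using Suc.IH unfolding Tk_def by blast
  have Tneg: "x < 0 \<Longrightarrow> Tk x = 0" for x unfolding Tk_def by (simp add: w_negh)
  have "(\<Sum>k<Suc n. (w k (h-1) 0 + w k (h-1) 1) * w (Suc n-1-k) 0 j) =
     (w 0 (h-1) 0 + w 0 (h-1) 1) * w n 0 j +
     (\<Sum>k<n. (w (Suc k) (h-1) 0 + w (Suc k) (h-1) 1) * w (n-1-k) 0 j)"
    by (subst sum.lessThan_Suc_shift) (simp del: w.simps)
  also have "(\<Sum>k<n. (w (Suc k) (h-1) 0 + w (Suc k) (h-1) 1) * w (n-1-k) 0 j)
     = Tk (h-3) + Tk (h-2) + Tk h + Tk (h+1)"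
    using Suc.prems unfolding Tk_def
    by (simp add: sum.distrib[symmetric] algebra_simps)
  finally have S: "(\<Sum>k<Suc n. (w k (h-1) 0 + w k (h-1) 1) * w (Suc n-1-k) 0 j) =
     (if h = 1 \<or> h = 2 then w n 0 j else 0) + Tk (h-3) + Tk (h-2) + Tk h + Tk (h+1)"
    using Suc.prems by auto
  have W1: "w (Suc n) (h-1) (j-1) = w n (h-3) (j-1) + w n (h-2) (j-1) + w n h (j-1) + w n (h+1) (j-1)"
    using Suc.prems by (simp add: algebra_simps)
  have L: "w (Suc n) h j = w n (h-2) j + w n (h-1) j + w n (h+1) j + w n (h+2) j"
    using Suc.prems by simp
  have R1: "w n (h+1) j = w n h (j-1) + Tk h" using IH[of "h+1"] Suc.prems by (simp add: algebra_simps)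
  have R2: "w n (h+2) j = w n (h+1) (j-1) + Tk (h+1)" using IH[of "h+2"] Suc.prems by (simp add: algebra_simps)
  show ?case
  proof (cases "h = 1 \<or> h = 2")
    case True
    then show ?thesis
    proof
      assume h: "h = 1"
      show ?thesis unfolding L W1 S using h R1 R2 Tneg[of "-2"] Tneg[of "-1"]
        by (simp add: w_negh)
    next
      assume h: "h = 2"
      have R0: "w n 1 j = w n 0 (j-1) + Tk 0" using IH[of 1] by simp
      show ?thesis unfolding L W1 S using h R0 R1 R2 Tneg[of "-1"]
        by (simp add: w_negh)
    qed
  next
    case False
    then have h3: "3 \<le> h" using Suc.prems by auto
    have Ra: "w n (h-2) j = w n (h-3) (j-1) + Tk (h-3)" using IH[of "h-2"] h3 by simp
    have Rb: "w n (h-1) j = w n (h-2) (j-1) + Tk (h-2)" using IH[of "h-1"] h3 by simp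
    show ?thesis unfolding L W1 S using False Ra Rb R1 R2 by simp
  qed
qed

definition Wf :: "int \<Rightarrow> int \<Rightarrow> int fps" where
  "Wf h j = Abs_fps (\<lambda>n. int (w n h j))"

lemma Wf_nth: "Wf h j $ n = int (w n h j)"
  by (simp add: Wf_def)

lemma Wf_negj: "j < 0 \<Longrightarrow> Wf h j = 0"
  by (rule fps_ext) (simp add: Wf_nth w_negj)

lemma Wf_sym: "Wf h j = Wf j h"
  by (rule fps_ext) (simp add: Wf_nth w_sym[of _ h j])

lemma Wf_fp: "1 \<le> h \<Longrightarrow> Wf h j = Wf (h-1) (j-1) + fps_X * ((Wf (h-1) 0 + Wf (h-1) 1) * Wf 0 j)"
proof (rule fps_ext)
  fix n assume h: "1 \<le> h"
  show "Wf h j $ n = (Wf (h-1) (j-1) + fps_X * ((Wf (h-1) 0 + Wf (h-1) 1) * Wf 0 j)) $ n"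
  proof (cases n)
    case 0
    then show ?thesis using h by (simp add: Wf_nth)
  next
    case (Suc m)
    have "w n h j = w n (h-1) (j-1) + (\<Sum>k<n. (w k (h-1) 0 + w k (h-1) 1) * w (n-1-k) 0 j)"
      using w_fp[OF h] .
    also have "(\<Sum>k<n. (w k (h-1) 0 + w k (h-1) 1) * w (n-1-k) 0 j)
        = (\<Sum>k=0..m. (w k (h-1) 0 + w k (h-1) 1) * w (m-k) 0 j)"
      using Suc by (simp add: atLeast0AtMost lessThan_Suc_atMost)
    finally have eq: "w n h j = w n (h-1) (j-1) + (\<Sum>k=0..m. (w k (h-1) 0 + w k (h-1) 1) * w (m-k) 0 j)" .
    have "(fps_X * ((Wf (h-1) 0 + Wf (h-1) 1) * Wf 0 j)) $ n = ((Wf (h-1) 0 + Wf (h-1) 1) * Wf 0 j) $ m"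
      using Suc by simp
    also have "\<dots> = (\<Sum>k=0..m. int ((w k (h-1) 0 + w k (h-1) 1) * w (m-k) 0 j))"
      by (simp add: fps_mult_nth Wf_nth)
    finally show ?thesis using eq
      by (simp add: Wf_nth of_nat_sum)
  qed
qed

lemma Wf_00: "Wf 0 0 = 1 + fps_X * (Wf 1 0 + Wf 2 0)"
proof (rule fps_ext)
  fix n show "Wf 0 0 $ n = (1 + fps_X * (Wf 1 0 + Wf 2 0)) $ n"
    by (cases n) (simp_all add: Wf_nth w_negh)
qed

lemma alg_cert:
  fixes x E F :: "'a::comm_ring_1"
  shows "x*E*(1 - x*E)^2 - x*((x*E)^2 - x*E + 1)^2 =
    x*(1 - x*E)^2 * (E - (1 + x*F + x^2*F*E + x^2*E^2 + x^3*(E+F)*F*E))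
    + (x^2 + x^4*E*F - x^5*E^2*F) * (F*(1 - x*E) - x*E^2)"
  by (simp add: algebra_simps eval_nat_numeral)

lemma walk_facts:
  defines "E \<equiv> Wf 0 0" and "F \<equiv> Wf 0 1"
  shows "F * (1 - fps_X*E) = fps_X * E^2"
    and "fps_X*E*(1 - fps_X*E)^2 = fps_X*((fps_X*E)^2 - fps_X*E + 1)^2"
proof -
  have R: "Wf 1 0 = fps_X * ((E + F) * E)"
    using Wf_fp[of 1 0] by (simp add: Wf_negj E_def F_def)
  have RF: "Wf 1 0 = F" unfolding F_def by (rule Wf_sym)
  have G: "Wf 1 1 = E + fps_X * ((E + F) * F)"
    using Wf_fp[of 1 1] by (simp add: E_def F_def)
  have W: "Wf 2 0 = fps_X * ((F + Wf 1 1) * E)"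
    using Wf_fp[of 2 0] by (simp add: Wf_negj E_def RF)
  have h1: "F * (1 - fps_X*E) = fps_X * E^2"
    using R RF by (simp add: algebra_simps power2_eq_square)
  have h2: "E = 1 + fps_X*F + fps_X^2*F*E + fps_X^2*E^2 + fps_X^3*(E+F)*F*E"
    using Wf_00 W G RF unfolding E_def[symmetric]
    by (simp add: algebra_simps power2_eq_square power3_eq_cube)
  show "F * (1 - fps_X*E) = fps_X * E^2" by (fact h1)
  have "fps_X*E*(1 - fps_X*E)^2 - fps_X*((fps_X*E)^2 - fps_X*E + 1)^2 = 0"
  proof -
    have h1': "F*(1 - fps_X*E) - fps_X*E^2 = 0" using h1 by simp
    have h2': "E - (1 + fps_X*F + fps_X^2*F*E + fps_X^2*E^2 + fps_X^3*(E+F)*F*E) = 0"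
      using h2 by simp
    have "fps_X*E*(1 - fps_X*E)^2 - fps_X*((fps_X*E)^2 - fps_X*E + 1)^2 =
      fps_X*(1 - fps_X*E)^2 * (E - (1 + fps_X*F + fps_X^2*F*E + fps_X^2*E^2 + fps_X^3*(E+F)*F*E))
    + (fps_X^2 + fps_X^4*E*F - fps_X^5*E^2*F) * (F*(1 - fps_X*E) - fps_X*E^2)"
      by (rule alg_cert)
    also have "\<dots> = 0" unfolding h1' h2' by simp
    finally show ?thesis .
  qed
  then show "fps_X*E*(1 - fps_X*E)^2 = fps_X*((fps_X*E)^2 - fps_X*E + 1)^2" by simp
qed

lemma leaves_pos: "leaves t \<ge> 1"
  by (induction t) auto

lemma eval01: "eval_zeros t = 0 \<or> eval_zeros t = 1"
  by (cases t) (auto simp: wedge_def)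

lemma finite_leaves: "finite {t. leaves t = k}"
proof (induction k rule: less_induct)
  case (less k)
  have "{t. leaves t = k} \<subseteq> {Leaf} \<union> (\<lambda>(l,r). Node l r) ` (\<Union>i\<in>{1..<k}. {t. leaves t = i} \<times> {t. leaves t = k - i})"
  proof
    fix t assume "t \<in> {t. leaves t = k}"
    then show "t \<in> {Leaf} \<union> (\<lambda>(l,r). Node l r) ` (\<Union>i\<in>{1..<k}. {t. leaves t = i} \<times> {t. leaves t = k - i})"
    proof (cases t)
      case (Node l r)
      with \<open>t \<in> _\<close> have "leaves l + leaves r = k" by simp
      moreover have "leaves l \<ge> 1" "leaves r \<ge> 1" by (rule leaves_pos)+
      ultimately show ?thesis using Node by (auto intro!: image_eqI[of _ _ "(l,r)"])
    qed simp
  qed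
  moreover have "finite (\<Union>i\<in>{1..<k}. {t. leaves t = i} \<times> {t. leaves t = k - i})"
    using less by auto
  ultimately show ?case by (meson finite.emptyI finite.insertI finite_UnI finite_imageI finite_subset)
qed

lemma node_count:
  "card {t. leaves t = k \<and> (\<exists>l r. t = Node l r \<and> P l \<and> Q r)} =
   (\<Sum>i\<le>k. card {l. leaves l = i \<and> P l} * card {r. leaves r = k - i \<and> Q r})"
proof -
  have eq: "{t. leaves t = k \<and> (\<exists>l r. t = Node l r \<and> P l \<and> Q r)} =
     (\<lambda>(l,r). Node l r) ` (\<Union>i\<in>{..k}. {l. leaves l = i \<and> P l} \<times> {r. leaves r = k - i \<and> Q r})"
  proof (rule set_eqI, rule iffI)
    fix t assume "t \<in> {t. leaves t = k \<and> (\<exists>l r. t = Node l r \<and> P l \<and> Q r)}"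
    then obtain l r where t: "t = Node l r" "P l" "Q r" "leaves l + leaves r = k" by auto
    show "t \<in> (\<lambda>(l,r). Node l r) ` (\<Union>i\<in>{..k}. {l. leaves l = i \<and> P l} \<times> {r. leaves r = k - i \<and> Q r})"
      by (rule image_eqI[of _ _ "(l,r)"]) (use t in auto)
  qed auto
  have fin: "finite {l. leaves l = i \<and> P l}" for i P
    by (rule finite_subset[OF _ finite_leaves[of i]]) auto
  have "card ((\<lambda>(l,r). Node l r) ` (\<Union>i\<in>{..k}. {l. leaves l = i \<and> P l} \<times> {r. leaves r = k - i \<and> Q r}))
      = card (\<Union>i\<in>{..k}. {l. leaves l = i \<and> P l} \<times> {r. leaves r = k - i \<and> Q r})"
    by (rule card_image) (auto simp: inj_on_def)
  also have "\<dots> = (\<Sum>i\<le>k. card ({l. leaves l = i \<and> P l} \<times> {r. leaves r = k - i \<and> Q r}))"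
    by (rule card_UN_disjoint) (auto simp: fin)
  also have "\<dots> = (\<Sum>i\<le>k. card {l. leaves l = i \<and> P l} * card {r. leaves r = k - i \<and> Q r})"
    by (simp add: card_cartesian_product)
  finally show ?thesis using eq by simp
qed

definition cnt :: "nat \<Rightarrow> (bracketing \<Rightarrow> bool) \<Rightarrow> nat" where
  "cnt k P = card {t. leaves t = k \<and> P t}"

lemma cnt_split: "cnt k P = (if k = 1 \<and> P Leaf then 1 else 0) +
   card {t. leaves t = k \<and> (\<exists>l r. t = Node l r \<and> P t)}"
proof -
  have "{t. leaves t = k \<and> P t} = {t. t = Leaf \<and> k = 1 \<and> P Leaf} \<union> {t. leaves t = k \<and> (\<exists>l r. t = Node l r \<and> P t)}"
    apply (rule set_eqI)
    subgoal for t by (cases t) auto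
    done
  moreover have "finite {t. leaves t = k \<and> (\<exists>l r. t = Node l r \<and> P t)}"
    by (rule finite_subset[OF _ finite_leaves[of k]]) auto
  moreover have "card {t. t = Leaf \<and> k = 1 \<and> P Leaf} = (if k = 1 \<and> P Leaf then 1 else 0)" by auto
  moreover have "{t. t = Leaf \<and> k = 1 \<and> P Leaf} \<inter> {t. leaves t = k \<and> (\<exists>l r. t = Node l r \<and> P t)} = {}" by auto
  ultimately show ?thesis unfolding cnt_def
    by (simp add: card_Un_disjoint)
qed


lemma cntC: "cnt k (\<lambda>_. True) = (if k = 1 then 1 else 0) + (\<Sum>i\<le>k. cnt i (\<lambda>_. True) * cnt (k-i) (\<lambda>_. True))"
proof -
  have "cnt k (\<lambda>_. True) = (if k = 1 then 1 else 0) + card {t. leaves t = k \<and> (\<exists>l r. t = Node l r \<and> True)}"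
    using cnt_split[of k "\<lambda>_. True"] by simp
  also have "card {t. leaves t = k \<and> (\<exists>l r. t = Node l r \<and> True)} = card {t. leaves t = k \<and> (\<exists>l r. t = Node l r \<and> True \<and> True)}"
    by simp
  also have "\<dots> = (\<Sum>i\<le>k. cnt i (\<lambda>_. True) * cnt (k-i) (\<lambda>_. True))"
    unfolding node_count cnt_def ..
  finally show ?thesis .
qed

lemma cntA: "cnt k (\<lambda>t. eval_zeros t = 0) = (if k = 1 then 1 else 0) +
  (\<Sum>i\<le>k. cnt i (\<lambda>t. eval_zeros t = 0) * cnt (k-i) (\<lambda>t. eval_zeros t = 1))"
proof -
  have "cnt k (\<lambda>t. eval_zeros t = 0) = (if k = 1 then 1 else 0) + card {t. leaves t = k \<and> (\<exists>l r. t = Node l r \<and> eval_zeros t = 0)}"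
    using cnt_split[of k "\<lambda>t. eval_zeros t = 0"] by simp
  also have "{t. leaves t = k \<and> (\<exists>l r. t = Node l r \<and> eval_zeros t = 0)} =
        {t. leaves t = k \<and> (\<exists>l r. t = Node l r \<and> eval_zeros l = 0 \<and> eval_zeros r = 1)}"
  proof (rule Collect_cong)
    fix t show "(leaves t = k \<and> (\<exists>l r. t = Node l r \<and> eval_zeros t = 0)) =
        (leaves t = k \<and> (\<exists>l r. t = Node l r \<and> eval_zeros l = 0 \<and> eval_zeros r = 1))"
      by (cases t) (auto simp: wedge_def)
  qed
  also have "card \<dots> = (\<Sum>i\<le>k. cnt i (\<lambda>t. eval_zeros t = 0) * cnt (k-i) (\<lambda>t. eval_zeros t = 1))"
    unfolding node_count cnt_def ..
  finally show ?thesis .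
qed

lemma cntCAB: "cnt k (\<lambda>_. True) = cnt k (\<lambda>t. eval_zeros t = 0) + cnt k (\<lambda>t. eval_zeros t = 1)"
proof -
  have U: "{t. leaves t = k \<and> True} = {t. leaves t = k \<and> eval_zeros t = 0} \<union> {t. leaves t = k \<and> eval_zeros t = 1}"
    using eval01 by blast
  have F: "finite {t. leaves t = k \<and> eval_zeros t = v}" for v
    by (rule finite_subset[OF _ finite_leaves[of k]]) blast
  have D: "{t. leaves t = k \<and> eval_zeros t = 0} \<inter> {t. leaves t = k \<and> eval_zeros t = 1} = {}" by auto
  show ?thesis unfolding cnt_def U using card_Un_disjoint[OF F F D] .
qed

lemma cnt0: "cnt 0 P = 0"
proof -
  have "{t. leaves t = 0 \<and> P t} = {}" using leaves_pos by (metis (mono_tags, lifting) Collect_empty_eq not_one_le_zero)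
  then show ?thesis unfolding cnt_def by (simp only: card.empty)
qed

definition Cf :: "int fps" where "Cf = Abs_fps (\<lambda>k. int (cnt k (\<lambda>_. True)))"
definition Af :: "int fps" where "Af = Abs_fps (\<lambda>k. int (cnt k (\<lambda>t. eval_zeros t = 0)))"
definition Bf :: "int fps" where "Bf = Abs_fps (\<lambda>k. int (cnt k (\<lambda>t. eval_zeros t = 1)))"

lemma Cf_eq: "Cf = fps_X + Cf * Cf"
proof (rule fps_ext)
  fix k
  show "Cf $ k = (fps_X + Cf * Cf) $ k"
    using arg_cong[OF cntC[of k], of int]
    by (simp add: Cf_def fps_mult_nth atLeast0AtMost of_nat_sum)
qed

lemma Af_eq: "Af = fps_X + Af * Bf"
proof (rule fps_ext)
  fix k
  show "Af $ k = (fps_X + Af * Bf) $ k"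
    using arg_cong[OF cntA[of k], of int]
    by (simp add: Af_def Bf_def fps_mult_nth atLeast0AtMost of_nat_sum)
qed

lemma CAB: "Cf = Af + Bf"
  by (rule fps_ext) (simp add: Cf_def Af_def Bf_def cntCAB)

lemma nz: "(f :: int fps) $ 0 \<noteq> 0 \<Longrightarrow> a * f = 0 \<Longrightarrow> a = 0"
  using fps_nonzeroI[of f 0] by simp

theorem proposition5p5:
  fixes n :: nat
  shows "card (walks n) = card {t. leaves t = n + 2 \<and> eval_zeros t = 0}"
proof -
  define E where "E = Wf 0 0"
  define F where "F = Wf 0 1"
  define X :: "int fps" where "X = fps_X"
  define z where "z = X * E"
  define q where "q = z^2 - z + 1"
  have hF: "F * (1 - z) = X * E^2" using walk_facts(1) unfolding E_def F_def z_def X_def .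
  have hq: "z * (1 - z)^2 = X * q^2" using walk_facts(2) unfolding E_def F_def z_def X_def q_def .
  have z0: "z $ 0 = 0" unfolding z_def X_def by simp
  have q0: "q $ 0 = 1" unfolding q_def using z0 by (simp add: power2_eq_square fps_mult_nth)
  have C0: "Cf $ 0 = 0" by (simp add: Cf_def cnt0)
  have A0: "Af $ 0 = 0" by (simp add: Af_def cnt0)
  define Y where "Y = Cf * q"
  have CE: "Cf = X + Cf * Cf" using Cf_eq unfolding X_def .
  have "(Y - z) * (q - Y - z) = (Cf - X - Cf*Cf) * q^2 - (z * (1 - z)^2 - X * q^2)"
    unfolding Y_def q_def by (simp add: algebra_simps power2_eq_square)
  also have "\<dots> = 0"
  proof -
    have "Cf - (X + Cf*Cf) = 0" using CE by (metis diff_self)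
    then have c0: "Cf - X - Cf*Cf = 0" by (simp add: algebra_simps)
    have h0: "z * (1 - z)^2 - X * q^2 = 0" using hq by simp
    show ?thesis unfolding c0 h0 by simp
  qed
  finally have e1: "(Y - z) * (q - Y - z) = 0" .
  have n1: "(q - Y - z) $ 0 \<noteq> 0" using q0 z0 C0 by (simp add: Y_def fps_mult_nth)
  have "Y - z = 0" by (rule nz[OF n1 e1])
  then have Yz: "Cf * q = z" unfolding Y_def by simp
  define Aw where "Aw = X + X^2 * F"
  have "Aw * (1 - z) - X * q = X^2 * (F * (1 - z) - X * E^2)"
    unfolding Aw_def q_def z_def by (simp add: algebra_simps power2_eq_square)
  then have Aw1: "Aw * (1 - z) = X * q" using hF by simp
  have "(Aw * q - z * (1 - z)) * (1 - z) = q * (Aw * (1 - z) - X * q) + (X * q^2 - z * (1 - z)^2)"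
    by (simp add: algebra_simps power2_eq_square)
  also have "\<dots> = 0" using Aw1 hq by simp
  finally have e2: "(Aw * q - z * (1 - z)) * (1 - z) = 0" .
  have n2: "(1 - z) $ 0 \<noteq> 0" using z0 by simp
  have "Aw * q - z * (1 - z) = 0" by (rule nz[OF n2 e2])
  then have Awq: "Aw * q = z * (1 - z)" by simp
  have "(Aw - X - Aw * (Cf - Aw)) * q^2 =
      (Aw*q) * q - X * q^2 - (Aw*q) * ((Cf*q) - (Aw*q))"
    by (simp add: algebra_simps power2_eq_square)
  also have "\<dots> = z * (1 - z) * q - X * q^2 - z * (1 - z) * (z - z * (1 - z))"
    using Awq Yz by simp
  also have "\<dots> = (z * (1 - z)^2 - X * q^2)"
    unfolding q_def by (simp add: algebra_simps power2_eq_square)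
  also have "\<dots> = 0" using hq by simp
  finally have e3: "(Aw - X - Aw * (Cf - Aw)) * q^2 = 0" .
  have n3: "(q^2) $ 0 \<noteq> 0" using q0 by (simp add: power2_eq_square fps_mult_nth)
  have "Aw - X - Aw * (Cf - Aw) = 0" by (rule nz[OF n3 e3])
  then have AwE: "Aw = X + Aw * (Cf - Aw)" by (simp add: algebra_simps)
  have "Cf - Af = Bf" unfolding CAB by simp
  then have AfE: "Af = X + Af * (Cf - Af)" using Af_eq unfolding X_def by simp
  have "(Af - Aw) * (1 - Cf + Af + Aw) = (Af - X - Af * (Cf - Af)) - (Aw - X - Aw * (Cf - Aw))"
    by (simp add: algebra_simps)
  also have "\<dots> = 0"
  proof -
    have "Af - (X + Af * (Cf - Af)) = 0" using AfE by (metis diff_self)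
    then have a0: "Af - X - Af * (Cf - Af) = 0" by (simp add: algebra_simps)
    have "Aw - (X + Aw * (Cf - Aw)) = 0" using AwE by (metis diff_self)
    then have a1: "Aw - X - Aw * (Cf - Aw) = 0" by (simp add: algebra_simps)
    show ?thesis unfolding a0 a1 by simp
  qed
  finally have e4: "(Af - Aw) * (1 - Cf + Af + Aw) = 0" .
  have "Aw $ 0 = 0" unfolding Aw_def X_def by (simp add: fps_X_power_mult_nth)
  then have n4: "(1 - Cf + Af + Aw) $ 0 \<noteq> 0" using C0 A0 by simp
  have "Af - Aw = 0" by (rule nz[OF n4 e4])
  then have "Af = Aw" by simp
  then have "Af $ (n+2) = Aw $ (n+2)" by simp
  then have "int (cnt (n+2) (\<lambda>t. eval_zeros t = 0)) = int (w n 0 1)"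
    unfolding Aw_def X_def F_def by (simp add: Af_def fps_X_power_mult_nth Wf_nth)
  then show ?thesis unfolding card_walks cnt_def by simp
qed

end
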